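(* Let $G=(V,E)$ be a simple biconnected graph and let $w$ be a vertex such that the set $F$ of edges of $G-w$ is a flacet of the graphic matroid $\mathcal{M}(G)$. Then $F$ is $k$-level if and only if $\deg(w)=k$.
   Context: The graphic matroid $\mathcal{M}(G)$ has ground set $E$ and bases the spanning forests (spanning trees, for connected $G$). A flacet of a matroid $\mathcal{M}$ on $E$ is a flat $\emptyset\neq S\subsetneq E$ (i.e. $\operatorname{rk}(S)<\operatorname{rk}(S\cup e)$ for all $e\notin S$) such that the restriction $\mathcal{M}|_S$ and the contraction $\mathcal{M}/S$ are connected matroids. A flacet $F$ is $k$-level if the function $\ell_F(x)=\sum_{e\in F}x_e$ takes exactly $k$ distinct values on the base configuration $\{\mathbf{1}_B: B \text{ a basis}\}\subset\mathbb{R}^E$. *)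

theory Defs
  imports Complex_Main
begin

definition simple_graph :: "'v set \<Rightarrow> 'v set set \<Rightarrow> bool" where
  "simple_graph V E \<longleftrightarrow> finite V \<and>
     (\<forall>e\<in>E. \<exists>u v. e = {u, v} \<and> u \<noteq> v \<and> u \<in> V \<and> v \<in> V)"

definition reach :: "'v set set \<Rightarrow> 'v \<Rightarrow> 'v \<Rightarrow> bool" where
  "reach A = (\<lambda>u v. {u, v} \<in> A)\<^sup>*\<^sup>*"

definition graph_connected :: "'v set \<Rightarrow> 'v set set \<Rightarrow> bool" where
  "graph_connected V E \<longleftrightarrow> (\<forall>u\<in>V. \<forall>v\<in>V. reach E u v)"

definition edges_avoiding :: "'v set set \<Rightarrow> 'v \<Rightarrow> 'v set set" where
  "edges_avoiding E w = {e\<in>E. w \<notin> e}"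

definition biconnected :: "'v set \<Rightarrow> 'v set set \<Rightarrow> bool" where
  "biconnected V E \<longleftrightarrow> card V \<ge> 3 \<and> graph_connected V E \<and>
     (\<forall>w\<in>V. graph_connected (V - {w}) (edges_avoiding E w))"

definition degree :: "'v set set \<Rightarrow> 'v \<Rightarrow> nat" where
  "degree E w = card {e\<in>E. w \<in> e}"

text \<open>A forest: an edge set containing no cycle, i.e. no edge whose endpoints are
  still joined after removing it.\<close>
definition forest :: "'v set set \<Rightarrow> bool" where
  "forest A \<longleftrightarrow> (\<forall>e\<in>A. \<forall>u v. e = {u, v} \<longrightarrow> \<not> reach (A - {e}) u v)"

definition graphic_basis :: "'v set set \<Rightarrow> 'v set set \<Rightarrow> bool" where
  "graphic_basis E B \<longleftrightarrow> B \<subseteq> E \<and> forest B \<and> (\<forall>e\<in>E - B. \<not> forest (insert e B))"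

definition graphic_rank :: "'v set set \<Rightarrow> nat" where
  "graphic_rank A = Max {card B | B. B \<subseteq> A \<and> forest B}"

definition m_indep :: "('a set \<Rightarrow> nat) \<Rightarrow> 'a set \<Rightarrow> bool" where
  "m_indep r A \<longleftrightarrow> r A = card A"

definition m_circuit :: "'a set \<Rightarrow> ('a set \<Rightarrow> nat) \<Rightarrow> 'a set \<Rightarrow> bool" where
  "m_circuit X r C \<longleftrightarrow> C \<subseteq> X \<and> \<not> m_indep r C \<and> (\<forall>D. D \<subset> C \<longrightarrow> m_indep r D)"

definition m_connected :: "'a set \<Rightarrow> ('a set \<Rightarrow> nat) \<Rightarrow> bool" where
  "m_connected X r \<longleftrightarrow>
     (\<forall>e\<in>X. \<forall>f\<in>X. e \<noteq> f \<longrightarrow> (\<exists>C. m_circuit X r C \<and> e \<in> C \<and> f \<in> C))"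

definition m_flat :: "'a set \<Rightarrow> ('a set \<Rightarrow> nat) \<Rightarrow> 'a set \<Rightarrow> bool" where
  "m_flat X r S \<longleftrightarrow> S \<subseteq> X \<and> (\<forall>e\<in>X - S. r S < r (insert e S))"

text \<open>Restriction M|S has ground set S and the same rank; contraction M/S has ground
  set X - S and rank A \<mapsto> r(A \<union> S) - r(S).\<close>
definition m_flacet :: "'a set \<Rightarrow> ('a set \<Rightarrow> nat) \<Rightarrow> 'a set \<Rightarrow> bool" where
  "m_flacet X r S \<longleftrightarrow> S \<noteq> {} \<and> S \<subset> X \<and> m_flat X r S \<and>
     m_connected S r \<and> m_connected (X - S) (\<lambda>A. r (A \<union> S) - r S)"

definition graphic_k_level :: "'v set set \<Rightarrow> 'v set set \<Rightarrow> nat \<Rightarrow> bool" where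
  "graphic_k_level E F k \<longleftrightarrow>
     card ((\<lambda>B. \<Sum>e\<in>F. (if e \<in> B then 1 else 0 :: real)) ` {B. graphic_basis E B}) = k"

end

theory Submission
  imports Defs
begin

lemma reach_refl[simp]: "reach A x x" by (simp add: reach_def)
lemma reach_edge: "{u,v} \<in> A \<Longrightarrow> reach A u v"
  unfolding reach_def by auto
lemma reach_trans: "reach A x y \<Longrightarrow> reach A y z \<Longrightarrow> reach A x z"
  unfolding reach_def by auto
lemma reach_sym: "reach A x y \<Longrightarrow> reach A y x"
  unfolding reach_def
proof (induction rule: rtranclp_induct)
  case base then show ?case by simp
next
  case (step y z)
  have "{z,y} \<in> A" using step(2) by (simp add: insert_commute)
  then show ?case using step(3) by (meson converse_rtranclp_into_rtranclp)
qed
lemma reach_mono: "reach A x y \<Longrightarrow> A \<subseteq> A' \<Longrightarrow> reach A' x y"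
  unfolding reach_def
proof (induction rule: rtranclp_induct)
  case base then show ?case by simp
next
  case (step y z)
  then show ?case by (meson in_mono rtranclp.rtrancl_into_rtrancl)
qed

lemma reach_insert:
  assumes "reach (insert {u,v} C) a b"
  shows "reach C a b \<or> (reach C a u \<and> reach C v b) \<or> (reach C a v \<and> reach C u b)"
  using assms unfolding reach_def[of "insert {u,v} C"]
proof (induction rule: rtranclp_induct)
  case base then show ?case by simp
next
  case (step y z)
  from step(2) have "{y,z} = {u,v} \<or> {y,z} \<in> C" by simp
  then show ?case
  proof
    assume e: "{y,z} = {u,v}"
    then have "(y = u \<and> z = v) \<or> (y = v \<and> z = u)" by (simp only: doubleton_eq_iff)
    then show ?thesis
    proof
      assume h: "y = u \<and> z = v" then show ?thesis using step(3) by (simp, blast)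
    next
      assume h: "y = v \<and> z = u" then show ?thesis using step(3) by (simp, blast)
    qed
  next
    assume "{y,z} \<in> C"
    then have yz: "reach C y z" by (rule reach_edge)
    have "\<And>t. reach C t y \<Longrightarrow> reach C t z" using yz reach_trans by metis
    then show ?thesis using step(3) by (elim disjE) auto
  qed
qed

lemma reach_isolated: "(\<forall>h\<in>C. x \<notin> h) \<Longrightarrow> reach C x y \<Longrightarrow> y = x"
  unfolding reach_def
  by (erule converse_rtranclpE) auto

lemma reach_lift:
  assumes "\<forall>f\<in>C. \<forall>a b. f = {a,b} \<longrightarrow> reach B a b"
  shows "reach C x y \<Longrightarrow> reach B x y"
  unfolding reach_def[of C]
proof (induction rule: rtranclp_induct)
  case base then show ?case by simp
next
  case (step y z)
  have "reach B y z" using assms step(2) by blast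
  then show ?case using step(3) reach_trans by metis
qed

lemma forest_subset:
  assumes "forest A" "A' \<subseteq> A" shows "forest A'"
  unfolding forest_def
proof (intro ballI allI impI notI)
  fix e u v assume e: "e \<in> A'" "e = {u,v}" "reach (A' - {e}) u v"
  have "reach (A - {e}) u v" using e(3) by (rule reach_mono) (use assms(2) in auto)
  then show False using assms(1) e(1,2) assms(2) unfolding forest_def by blast
qed

lemma not_forest_insert: "e = {u,v} \<Longrightarrow> e \<notin> B \<Longrightarrow> reach B u v \<Longrightarrow> \<not> forest (insert e B)"
proof
  assume "e = {u,v}" "e \<notin> B" "reach B u v" "forest (insert e B)"
  then have "\<not> reach (insert e B - {e}) u v" unfolding forest_def by blast
  moreover have "insert e B - {e} = B" using \<open>e \<notin> B\<close> by simp
  ultimately show False using \<open>reach B u v\<close> by simp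
qed

lemma forestD: assumes "forest A" "{u,v} \<in> A" shows "\<not> reach (A - {{u,v}}) u v"
proof -
  have "\<forall>a b. {u,v} = {a,b} \<longrightarrow> \<not> reach (A - {{u,v}}) a b"
    using assms unfolding forest_def by (rule bspec)
  then show ?thesis by simp
qed

lemma forest_insert:
  assumes f: "forest A" and nr: "\<not> reach A u v"
  shows "forest (insert {u,v} A)"
  unfolding forest_def
proof (intro ballI allI impI notI)
  fix g a b assume g: "g \<in> insert {u,v} A" and gab: "g = {a,b}"
    and r: "reach (insert {u,v} A - {g}) a b"
  show False
  proof (cases "g = {u,v}")
    case True
    have "insert {u,v} A - {g} \<subseteq> A" using True by auto
    with r have rab: "reach A a b" by (rule reach_mono)
    have "(a = u \<and> b = v) \<or> (a = v \<and> b = u)" using True gab by (simp only: doubleton_eq_iff)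
    then show False
    proof
      assume "a = u \<and> b = v" then show False using rab nr by simp
    next
      assume "a = v \<and> b = u" then show False using reach_sym[OF rab] nr by simp
    qed
  next
    case False
    then have gA: "g \<in> A" using g by simp
    have "insert {u,v} A - {g} = insert {u,v} (A - {g})" using False by (simp add: insert_Diff_if)
    with r have r2: "reach (insert {u,v} (A - {g})) a b" by simp
    have nab: "\<not> reach (A - {g}) a b" using forestD[OF f, of a b] gA unfolding gab by blast
    have sub: "A - {g} \<subseteq> A" by auto
    have ab: "reach A a b" using gA unfolding gab by (rule reach_edge)
    have m: "\<And>x y. reach (A - {g}) x y \<Longrightarrow> reach A x y" by (rule reach_mono[OF _ sub])
    have d: "reach (A-{g}) a b \<or> (reach (A-{g}) a u \<and> reach (A-{g}) v b) \<or> (reach (A-{g}) a v \<and> reach (A-{g}) u b)"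
      by (rule reach_insert[OF r2])
    have "reach A u v"
    proof (rule disjE[OF d])
      assume "reach (A-{g}) a b" then show ?thesis using nab by simp
    next
      assume "(reach (A-{g}) a u \<and> reach (A-{g}) v b) \<or> (reach (A-{g}) a v \<and> reach (A-{g}) u b)"
      then show ?thesis
      proof (rule disjE)
        assume h: "reach (A-{g}) a u \<and> reach (A-{g}) v b"
        have au: "reach A a u" using m h by simp
        have vb: "reach A v b" using m h by simp
        have "reach A u b" by (rule reach_trans[OF reach_sym[OF au] ab])
        then show ?thesis by (rule reach_trans[OF _ reach_sym[OF vb]])
      next
        assume h: "reach (A-{g}) a v \<and> reach (A-{g}) u b"
        have av: "reach A a v" using m h by simp
        have ub: "reach A u b" using m h by simp
        have "reach A u a" by (rule reach_trans[OF ub reach_sym[OF ab]])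
        then show ?thesis by (rule reach_trans[OF _ av])
      qed
    qed
    then show False using nr by simp
  qed
qed

lemma not_forest_reach: assumes "forest B" "\<not> forest (insert {u,v} B)" shows "reach B u v"
proof (rule ccontr)
  assume "\<not> reach B u v"
  then have "forest (insert {u,v} B)" by (rule forest_insert[OF assms(1)])
  with assms(2) show False by simp
qed

definition comp :: "'v set \<Rightarrow> 'v set set \<Rightarrow> nat" where
  "comp V A = card ((\<lambda>x. {y\<in>V. reach A x y}) ` V)"

lemma reach_cong: "reach A x u \<Longrightarrow> reach A x y = reach A u y"
  using reach_trans reach_sym by metis

lemma reach_insert_iff:
  "reach (insert {u,v} A) x y \<longleftrightarrow> reach A x y \<or> (reach A x u \<and> reach A v y) \<or> (reach A x v \<and> reach A u y)"
proof
  assume "reach (insert {u,v} A) x y" then show "reach A x y \<or> (reach A x u \<and> reach A v y) \<or> (reach A x v \<and> reach A u y)"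
    by (rule reach_insert)
next
  have sub: "A \<subseteq> insert {u,v} A" by auto
  have m: "\<And>a b. reach A a b \<Longrightarrow> reach (insert {u,v} A) a b" by (rule reach_mono[OF _ sub])
  have uv: "reach (insert {u,v} A) u v" by (rule reach_edge) simp
  have vu: "reach (insert {u,v} A) v u" by (rule reach_sym[OF uv])
  assume "reach A x y \<or> (reach A x u \<and> reach A v y) \<or> (reach A x v \<and> reach A u y)"
  then show "reach (insert {u,v} A) x y"
  proof (elim disjE conjE)
    assume "reach A x y" then show ?thesis by (rule m)
  next
    assume "reach A x u" "reach A v y"
    then show ?thesis using reach_trans[OF reach_trans[OF m uv] m] by simp
  next
    assume "reach A x v" "reach A u y"
    then show ?thesis using reach_trans[OF reach_trans[OF m vu] m] by simp
  qed
qed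

lemma comp_empty: "comp V {} = card V"
proof -
  have r: "\<And>x y. reach {} x y \<longleftrightarrow> x = y"
    unfolding reach_def by (auto elim: converse_rtranclpE)
  have "(\<lambda>x. {y\<in>V. reach {} x y}) ` V = (\<lambda>x. {x}) ` V"
    by (rule image_cong) (auto simp: r)
  moreover have "card ((\<lambda>x. {x}) ` V) = card V"
    by (rule card_image) (simp add: inj_on_def)
  ultimately show ?thesis unfolding comp_def by simp
qed

lemma comp_one:
  assumes "w \<in> V" "\<forall>x\<in>V. reach A x w"
  shows "comp V A = 1"
proof -
  have "(\<lambda>x. {y\<in>V. reach A x y}) ` V = {{y\<in>V. reach A w y}}"
  proof (rule set_eqI, rule iffI)
    fix X assume "X \<in> (\<lambda>x. {y\<in>V. reach A x y}) ` V"
    then obtain x where x: "x \<in> V" "X = {y\<in>V. reach A x y}" by (rule imageE) simp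
    have "\<And>y. reach A x y = reach A w y" using reach_cong assms(2) x(1) by metis
    then show "X \<in> {{y\<in>V. reach A w y}}" using x(2) by simp
  next
    fix X assume "X \<in> {{y\<in>V. reach A w y}}"
    then have "X = {y\<in>V. reach A w y}" by simp
    then show "X \<in> (\<lambda>x. {y\<in>V. reach A x y}) ` V" using assms(1) by (rule image_eqI)
  qed
  then show ?thesis unfolding comp_def by simp
qed

lemma comp_insert:
  assumes fin: "finite V" and uV: "u \<in> V" and vV: "v \<in> V" and nr: "\<not> reach A u v"
  shows "comp V (insert {u,v} A) + 1 = comp V A"
proof -
  define K where "K = (\<lambda>x. {y\<in>V. reach A x y})"
  define K' where "K' = (\<lambda>x. {y\<in>V. reach (insert {u,v} A) x y})"
  have nr': "\<not> reach A v u" using nr reach_sym by metis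
  have memK: "\<And>x y. y \<in> K x \<longleftrightarrow> y \<in> V \<and> reach A x y" unfolding K_def by simp
  have Keq: "\<And>x z. reach A x z \<Longrightarrow> K x = K z" unfolding K_def using reach_cong by metis
  have KeqD: "\<And>x z. z \<in> V \<Longrightarrow> K x = K z \<Longrightarrow> reach A x z"
  proof -
    fix x z assume "z \<in> V" "K x = K z"
    then have "z \<in> K x" using memK by simp
    then show "reach A x z" using memK by simp
  qed
  have K'x: "K' x = (if reach A x u \<or> reach A x v then K u \<union> K v else K x)" for x
  proof (cases "reach A x u")
    case True
    have r1: "\<And>y. reach A x y = reach A u y" by (rule reach_cong[OF True])
    show ?thesis unfolding K'_def K_def using True nr by (auto simp: reach_insert_iff r1)
  next
    case F1: False
    show ?thesis
    proof (cases "reach A x v")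
      case True
      have r1: "\<And>y. reach A x y = reach A v y" by (rule reach_cong[OF True])
      show ?thesis unfolding K'_def K_def using True nr' by (auto simp: reach_insert_iff r1)
    next
      case False
      show ?thesis unfolding K'_def K_def using False F1 by (simp add: reach_insert_iff)
    qed
  qed
  have Kuv: "K u \<noteq> K v" using KeqD[OF vV] nr by metis
  have img: "K' ` V = insert (K u \<union> K v) (K ` V - {K u, K v})"
  proof (rule set_eqI, rule iffI)
    fix X assume "X \<in> K' ` V"
    then obtain x where x: "x \<in> V" "X = K' x" by (rule imageE) simp
    show "X \<in> insert (K u \<union> K v) (K ` V - {K u, K v})"
    proof (cases "reach A x u \<or> reach A x v")
      case True then show ?thesis using x K'x by simp
    next
      case False
      then have "K x \<noteq> K u" "K x \<noteq> K v" using KeqD uV vV by metis+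
      moreover have "K x \<in> K ` V" using x(1) by (rule imageI)
      ultimately show ?thesis using x K'x False by simp
    qed
  next
    fix X assume X: "X \<in> insert (K u \<union> K v) (K ` V - {K u, K v})"
    show "X \<in> K' ` V"
    proof (cases "X = K u \<union> K v")
      case True
      have "K' u = K u \<union> K v" using K'x[of u] by simp
      then show ?thesis using True uV by (metis image_eqI)
    next
      case False
      then have X2: "X \<in> K ` V" "X \<noteq> K u" "X \<noteq> K v" using X by simp_all
      from X2(1) obtain x where x: "x \<in> V" "X = K x" by (rule imageE) simp
      have "\<not> reach A x u" "\<not> reach A x v" using Keq X2(2,3) x(2) by metis+
      then have "K' x = X" using K'x[of x] x(2) by simp
      then show ?thesis using x(1) by (metis image_eqI)
    qed
  qed
  have notin: "K u \<union> K v \<notin> K ` V - {K u, K v}"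
  proof
    assume "K u \<union> K v \<in> K ` V - {K u, K v}"
    then have "K u \<union> K v \<in> K ` V" by simp
    then obtain z where z: "z \<in> V" "K u \<union> K v = K z" by (rule imageE) simp
    have "u \<in> K u \<union> K v" using memK uV by simp
    then have "u \<in> K z" unfolding z(2) .
    then have "reach A z u" using memK by simp
    then have "K z = K u" by (rule Keq)
    moreover have "v \<in> K u \<union> K v" using memK vV by simp
    then have "v \<in> K z" unfolding z(2) .
    ultimately have "v \<in> K u" by simp
    then show False using memK nr by simp
  qed
  have finK: "finite (K ` V)" using fin by simp
  have sub2: "{K u, K v} \<subseteq> K ` V" using uV vV by simp
  have c2: "card {K u, K v} = 2" using Kuv by simp
  have ge: "card (K ` V) \<ge> 2" using card_mono[OF finK sub2] c2 by simp
  have "card (K' ` V) = Suc (card (K ` V - {K u, K v}))"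
    unfolding img by (rule card_insert_disjoint) (use finK notin in simp_all)
  also have "card (K ` V - {K u, K v}) = card (K ` V) - 2"
    using card_Diff_subset[OF _ sub2] c2 by simp
  finally have "card (K' ` V) + 1 = card (K ` V)" using ge by simp
  then show ?thesis unfolding comp_def K_def K'_def .
qed

lemma forest_card:
  assumes "finite V" "finite A"
  shows "forest A \<Longrightarrow> (\<forall>e\<in>A. \<exists>a b. e = {a,b} \<and> a \<in> V \<and> b \<in> V) \<Longrightarrow> card A + comp V A = card V"
  using assms(2)
proof (induction A rule: finite_induct)
  case empty then show ?case by (simp add: comp_empty)
next
  case (insert e A)
  obtain a b where ab: "e = {a,b}" "a \<in> V" "b \<in> V" using insert.prems(2) by auto
  have fA: "forest A" by (rule forest_subset[OF insert.prems(1)]) auto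
  have "\<not> reach (insert e A - {e}) a b" using forestD[OF insert.prems(1), of a b] ab(1) by simp
  moreover have "insert e A - {e} = A" using insert.hyps(2) by simp
  ultimately have nr: "\<not> reach A a b" by simp
  have c: "comp V (insert e A) + 1 = comp V A" unfolding ab(1) by (rule comp_insert[OF assms(1) ab(2,3) nr])
  have IH: "card A + comp V A = card V" using insert.IH fA insert.prems(2) by simp
  have "card (insert e A) = Suc (card A)" using insert.hyps by simp
  then show ?case using c IH by simp
qed


lemma reach_iso2: "\<forall>h\<in>C. x \<notin> h \<Longrightarrow> reach C a b \<Longrightarrow> a = x \<or> b = x \<Longrightarrow> a = b"
proof -
  assume iso: "\<forall>h\<in>C. x \<notin> h" and r: "reach C a b" and ab: "a = x \<or> b = x"
  show "a = b"
  proof (cases "a = x")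
    case True then show ?thesis using reach_isolated[OF iso, of b] r by simp
  next
    case False then have "b = x" using ab by simp
    then show ?thesis using reach_isolated[OF iso, of a] reach_sym[OF r] by simp
  qed
qed

lemma sg_edge:
  assumes "simple_graph V E" "{a,b} \<in> E"
  shows "a \<noteq> b \<and> a \<in> V \<and> b \<in> V"
proof -
  obtain p q where pq: "{a,b} = {p,q}" "p \<noteq> q" "p \<in> V" "q \<in> V"
    using assms unfolding simple_graph_def by blast
  then have "(a = p \<and> b = q) \<or> (a = q \<and> b = p)" by (simp only: doubleton_eq_iff)
  then show ?thesis using pq(2,3,4) by auto
qed

lemma sg_edge_at:
  assumes "simple_graph V E" "e \<in> E" "w \<in> e"
  obtains x where "e = {w,x}" "x \<noteq> w" "x \<in> V"
proof -
  obtain a b where ab: "e = {a,b}" "a \<noteq> b" "a \<in> V" "b \<in> V"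
    using assms(1,2) unfolding simple_graph_def by blast
  have "w = a \<or> w = b" using assms(3) ab(1) by simp
  then show ?thesis
  proof
    assume "w = a" then show ?thesis using that[of b] ab by simp
  next
    assume "w = b" then have "e = {w,a}" using ab(1) by (simp add: insert_commute)
    then show ?thesis using that[of a] ab \<open>w = b\<close> by simp
  qed
qed

lemma sg_finite: assumes "simple_graph V E" shows "finite E"
proof -
  have "E \<subseteq> Pow V"
  proof
    fix e assume "e \<in> E"
    then obtain a b where "e = {a,b}" "a \<in> V" "b \<in> V"
      using assms unfolding simple_graph_def by blast
    then show "e \<in> Pow V" by simp
  qed
  moreover have "finite V" using assms unfolding simple_graph_def by simp
  ultimately show ?thesis by (meson finite_Pow_iff finite_subset)
qed

lemma basis_edge_reach:
  assumes "graphic_basis E B" "{a,b} \<in> E"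
  shows "reach B a b"
proof (cases "{a,b} \<in> B")
  case True then show ?thesis by (rule reach_edge)
next
  case False
  have "forest B" using assms(1) unfolding graphic_basis_def by simp
  moreover have "\<not> forest (insert {a,b} B)" using assms False unfolding graphic_basis_def by simp
  ultimately show ?thesis by (rule not_forest_reach)
qed

lemma basis_card:
  assumes sg: "simple_graph V E" and conn: "graph_connected V E" and wV: "w \<in> V"
    and B: "graphic_basis E B"
  shows "card B + 1 = card V"
proof -
  have finV: "finite V" using sg unfolding simple_graph_def by simp
  have BE: "B \<subseteq> E" and fB: "forest B" using B unfolding graphic_basis_def by simp_all
  have finB: "finite B" using sg_finite[OF sg] BE finite_subset by blast
  have inV: "\<forall>e\<in>B. \<exists>a b. e = {a,b} \<and> a \<in> V \<and> b \<in> V"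
  proof
    fix e assume "e \<in> B" then have "e \<in> E" using BE by blast
    then show "\<exists>a b. e = {a,b} \<and> a \<in> V \<and> b \<in> V" using sg unfolding simple_graph_def by blast
  qed
  have lift: "\<forall>f\<in>E. \<forall>a b. f = {a,b} \<longrightarrow> reach B a b"
    using basis_edge_reach[OF B] by blast
  have "\<forall>x\<in>V. reach B x w"
  proof
    fix x assume "x \<in> V"
    then have "reach E x w" using conn wV unfolding graph_connected_def by blast
    then show "reach B x w" by (rule reach_lift[OF lift])
  qed
  then have "comp V B = 1" by (rule comp_one[OF wV])
  moreover have "card B + comp V B = card V" by (rule forest_card[OF finV finB fB inV])
  ultimately show ?thesis by simp
qed


lemma basis_meets:
  assumes sg: "simple_graph V E" and conn: "graph_connected V E" and wV: "w \<in> V"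
    and xV: "x \<in> V" and xw: "x \<noteq> w" and B: "graphic_basis E B"
  shows "B \<inter> {e\<in>E. w \<in> e} \<noteq> {}"
proof
  assume empty: "B \<inter> {e\<in>E. w \<in> e} = {}"
  have "reach E w x" using conn wV xV unfolding graph_connected_def by blast
  then obtain y where y: "{w,y} \<in> E"
    unfolding reach_def using xw by (auto elim: converse_rtranclpE)
  have yw: "y \<noteq> w" using sg_edge[OF sg y] by auto
  have BE: "B \<subseteq> E" and fB: "forest B" using B unfolding graphic_basis_def by simp_all
  have iso: "\<forall>h\<in>B. w \<notin> h" using empty BE by blast
  have nB: "{w,y} \<notin> B" using iso by auto
  have "\<not> reach B w y" using reach_isolated[OF iso, of y] yw by auto
  then have "forest (insert {w,y} B)" by (rule forest_insert[OF fB])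
  moreover have "\<not> forest (insert {w,y} B)" using B y nB unfolding graphic_basis_def by simp
  ultimately show False by simp
qed

lemma exists_basis:
  assumes sg: "simple_graph V E" and conn2: "graph_connected (V - {w}) (edges_avoiding E w)"
    and T0D: "T0 \<subseteq> {e\<in>E. w \<in> e}" and T0ne: "T0 \<noteq> {}"
  shows "\<exists>B. graphic_basis E B \<and> B \<inter> {e\<in>E. w \<in> e} = T0"
proof -
  define D where "D = {e\<in>E. w \<in> e}"
  define F where "F = edges_avoiding E w"
  have Fdef: "F = {e\<in>E. w \<notin> e}" unfolding F_def edges_avoiding_def by simp
  have finE: "finite E" by (rule sg_finite[OF sg])
  have fT0: "forest T0"
    unfolding forest_def
  proof (intro ballI allI impI notI)
    fix g a b assume g: "g \<in> T0" and gab: "g = {a,b}" and r: "reach (T0 - {g}) a b"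
    have gE: "g \<in> E" "w \<in> g" using g T0D by auto
    obtain x where x: "g = {w,x}" "x \<noteq> w" "x \<in> V" by (rule sg_edge_at[OF sg gE])
    have iso: "\<forall>h\<in>T0 - {g}. x \<notin> h"
    proof
      fix h assume h: "h \<in> T0 - {g}"
      then have hE: "h \<in> E" "w \<in> h" using T0D by auto
      obtain y where y: "h = {w,y}" "y \<noteq> w" "y \<in> V" by (rule sg_edge_at[OF sg hE])
      show "x \<notin> h"
      proof
        assume "x \<in> h" then have "x = y" using y x(2) by simp
        then have "h = g" using x(1) y(1) by simp
        then show False using h by simp
      qed
    qed
    have ab: "{a,b} = {w,x}" using gab x(1) by simp
    then have "(a = w \<and> b = x) \<or> (a = x \<and> b = w)" by (simp only: doubleton_eq_iff)
    then have "a = x \<or> b = x" "a \<noteq> b" using x(2) by auto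
    then show False using reach_iso2[OF iso r] by simp
  qed
  define Fs where "Fs = {A. T0 \<subseteq> A \<and> A \<subseteq> T0 \<union> F \<and> forest A}"
  have FsE: "\<And>A. A \<in> Fs \<Longrightarrow> A \<subseteq> E" unfolding Fs_def Fdef using T0D by blast
  have finFs: "finite Fs"
  proof (rule finite_subset)
    show "Fs \<subseteq> Pow E" using FsE by blast
    show "finite (Pow E)" using finE by simp
  qed
  have T0Fs: "T0 \<in> Fs" unfolding Fs_def using fT0 by blast
  define m where "m = Max (card ` Fs)"
  have "m \<in> card ` Fs" unfolding m_def by (rule Max_in) (use finFs T0Fs in auto)
  then obtain B where BFs: "B \<in> Fs" and cB: "card B = m" by auto
  have maxc: "\<And>A. A \<in> Fs \<Longrightarrow> card A \<le> card B"
    unfolding cB m_def by (rule Max_ge) (use finFs in auto)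
  have BE: "B \<subseteq> E" by (rule FsE[OF BFs])
  have finB: "finite B" using finE BE finite_subset by blast
  have T0B: "T0 \<subseteq> B" and BTF: "B \<subseteq> T0 \<union> F" and fB: "forest B" using BFs unfolding Fs_def by auto
  have BD: "B \<inter> D = T0"
  proof
    show "B \<inter> D \<subseteq> T0" using BTF unfolding D_def Fdef by blast
    show "T0 \<subseteq> B \<inter> D" using T0B T0D unfolding D_def by blast
  qed
  have Freach: "\<forall>f\<in>F. \<forall>a b. f = {a,b} \<longrightarrow> reach B a b"
  proof (intro ballI allI impI)
    fix f a b assume f: "f \<in> F" and fab: "f = {a,b}"
    show "reach B a b"
    proof (cases "f \<in> B")
      case True then show ?thesis using fab reach_edge by simp
    next
      case False
      have "\<not> forest (insert f B)"
      proof
        assume fi: "forest (insert f B)"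
        have "insert f B \<in> Fs" unfolding Fs_def using fi T0B BTF f by blast
        then have "card (insert f B) \<le> card B" by (rule maxc)
        moreover have "card (insert f B) = Suc (card B)" using finB False by simp
        ultimately show False by simp
      qed
      then show ?thesis using not_forest_reach[OF fB] fab by simp
    qed
  qed
  obtain t where tT0: "t \<in> T0" using T0ne by blast
  have tE: "t \<in> E" "w \<in> t" using tT0 T0D by auto
  obtain y where y: "t = {w,y}" "y \<noteq> w" "y \<in> V" by (rule sg_edge_at[OF sg tE])
  have yw: "reach B y w"
    using reach_sym[OF reach_edge[of w y B]] tT0 T0B y(1) by blast
  have "graphic_basis E B"
    unfolding graphic_basis_def
  proof (intro conjI ballI)
    show "B \<subseteq> E" by (rule BE)
    show "forest B" by (rule fB)
    fix e assume e: "e \<in> E - B"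
    show "\<not> forest (insert e B)"
    proof (cases "w \<in> e")
      case True
      have eE: "e \<in> E" using e by simp
      obtain x where x: "e = {w,x}" "x \<noteq> w" "x \<in> V" by (rule sg_edge_at[OF sg eE True])
      have "reach F x y" using conn2 x y unfolding graph_connected_def F_def by blast
      then have "reach B x y" by (rule reach_lift[OF Freach])
      then have "reach B x w" using yw reach_trans by metis
      then have "reach B w x" by (rule reach_sym)
      then show ?thesis using not_forest_insert[OF x(1)] e by simp
    next
      case False
      then have "e \<in> F" using e unfolding Fdef by simp
      obtain a b where ab: "e = {a,b}" using e sg unfolding simple_graph_def by blast
      have "reach B a b" using Freach \<open>e \<in> F\<close> ab by simp
      then show ?thesis using not_forest_insert[OF ab] e by simp
    qed
  qed
  then show ?thesis using BD unfolding D_def by blast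
qed


theorem proposition5p4:
  fixes V :: "'v set" and E :: "'v set set" and w :: 'v and k :: nat
  assumes "simple_graph V E"
    and "biconnected V E"
    and "w \<in> V"
    and "m_flacet E graphic_rank (edges_avoiding E w)"
  shows "graphic_k_level E (edges_avoiding E w) k \<longleftrightarrow> degree E w = k"
proof -
  note sg = assms(1) and wV = assms(3)
  have conn: "graph_connected V E" and conn2: "graph_connected (V - {w}) (edges_avoiding E w)"
    and c3: "card V \<ge> 3"
    using assms(2) wV unfolding biconnected_def by auto
  define D where "D = {e\<in>E. w \<in> e}"
  define F where "F = edges_avoiding E w"
  have Fdef: "F = {e\<in>E. w \<notin> e}" unfolding F_def edges_avoiding_def by simp
  have finE: "finite E" by (rule sg_finite[OF sg])
  have finD: "finite D" unfolding D_def using finE by simp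
  have finF: "finite F" unfolding Fdef using finE by simp
  have finV: "finite V" using sg unfolding simple_graph_def by simp
  obtain x where xV: "x \<in> V" and xw: "x \<noteq> w"
  proof -
    have "card (V - {w}) \<ge> 2" using c3 wV finV by simp
    then have "V - {w} \<noteq> {}" by (metis card.empty not_numeral_le_zero)
    then show ?thesis using that by blast
  qed
  define Bs where "Bs = {B. graphic_basis E B}"
  define J where "J = (\<lambda>B. card (B \<inter> D)) ` Bs"
  have valB: "(\<Sum>e\<in>F. (if e \<in> B then 1 else 0 :: real)) = real (card V - 1) - real (card (B \<inter> D))"
    if B: "B \<in> Bs" for B
  proof -
    have gb: "graphic_basis E B" using B unfolding Bs_def by simp
    have BE: "B \<subseteq> E" using gb unfolding graphic_basis_def by simp
    have finB: "finite B" using finE BE finite_subset by blast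
    have "(\<Sum>e\<in>F. (if e \<in> B then 1 else 0 :: real)) = (\<Sum>e\<in>F \<inter> B. 1)"
      by (rule sum.inter_restrict[symmetric, OF finF])
    also have "\<dots> = real (card (F \<inter> B))" by simp
    finally have s: "(\<Sum>e\<in>F. (if e \<in> B then 1 else 0 :: real)) = real (card (F \<inter> B))" .
    have "B = (F \<inter> B) \<union> (B \<inter> D)" using BE unfolding Fdef D_def by blast
    moreover have "(F \<inter> B) \<inter> (B \<inter> D) = {}" unfolding Fdef D_def by blast
    ultimately have "card B = card (F \<inter> B) + card (B \<inter> D)"
      using finB card_Un_disjoint[of "F \<inter> B" "B \<inter> D"] by (metis finite_Int)
    moreover have "card B + 1 = card V" by (rule basis_card[OF sg conn wV gb])
    ultimately show ?thesis using s by simp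
  qed
  have vals: "(\<lambda>B. \<Sum>e\<in>F. (if e \<in> B then 1 else 0 :: real)) ` Bs
      = (\<lambda>j. real (card V - 1) - real j) ` J"
    unfolding J_def image_image by (rule image_cong) (simp_all add: valB)
  have injf: "inj_on (\<lambda>j. real (card V - 1) - real j) J" by (rule inj_onI) simp
  have JI: "J = {1..card D}"
  proof
    show "J \<subseteq> {1..card D}"
    proof
      fix j assume "j \<in> J"
      then obtain B where B: "B \<in> Bs" "j = card (B \<inter> D)" unfolding J_def by blast
      have gb: "graphic_basis E B" using B unfolding Bs_def by simp
      have ne: "B \<inter> D \<noteq> {}" unfolding D_def by (rule basis_meets[OF sg conn wV xV xw gb])
      have "card (B \<inter> D) \<le> card D" by (rule card_mono[OF finD]) simp
      moreover have "card (B \<inter> D) \<ge> 1" using ne finD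
        by (metis One_nat_def Suc_leI card_gt_0_iff finite_Int)
      ultimately show "j \<in> {1..card D}" using B(2) by simp
    qed
    show "{1..card D} \<subseteq> J"
    proof
      fix j assume j: "j \<in> {1..card D}"
      then have "j \<le> card D" by simp
      then obtain T0 where T0: "T0 \<subseteq> D" "card T0 = j" "finite T0" by (rule obtain_subset_with_card_n)
      have "T0 \<noteq> {}" using T0(2) j by auto
      then obtain B where B: "graphic_basis E B" "B \<inter> D = T0"
        using exists_basis[OF sg conn2, of T0] T0(1) unfolding D_def by blast
      have "B \<in> Bs" using B(1) unfolding Bs_def by simp
      moreover have "j = card (B \<inter> D)" using B(2) T0(2) by simp
      ultimately show "j \<in> J" unfolding J_def by blast
    qed
  qed
  have "card ((\<lambda>B. \<Sum>e\<in>F. (if e \<in> B then 1 else 0 :: real)) ` Bs) = card D"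
    unfolding vals card_image[OF injf] by (simp add: JI)
  then have "card ((\<lambda>B. \<Sum>e\<in>F. (if e \<in> B then 1 else 0 :: real)) ` {B. graphic_basis E B}) = degree E w"
    unfolding Bs_def degree_def D_def by simp
  then show ?thesis unfolding graphic_k_level_def F_def by simp
qed

end
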